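(* Let $k:\mathbb R\to[0,\infty)$ be continuous with $\int_{\mathbb R}k(x)\,dx=1$, satisfying (K1) there is $\lambda>0$ with $\int_{\mathbb R}k(x)e^{\lambda|x|}dx<+\infty$, and (K2) $k(x_1)>0$ and $k(x_2)>0$ for some $x_1>0$, $x_2<0$. Let $f\in C^1([0,1])$ satisfy (H): $f(0)=f(1)=0$, $f(u)>0$ for $u\in(0,1)$, $f'(0)>0$, and $f(u)\leqslant f'(0)u$ for $u\in(0,1)$. Define \[ c_l^*=\sup_{\lambda<0}\Big\{\lambda^{-1}\Big[\int_{\mathbb R}k(x)e^{\lambda x}dx-1+f'(0)\Big]\Big\},\qquad c_r^*=\inf_{\lambda>0}\Big\{\lambda^{-1}\Big[\int_{\mathbb R}k(x)e^{\lambda x}dx-1+f'(0)\Big]\Big\}, \] and $E(k)=\operatorname{sign}(J(k))\big[1-\inf_{\lambda\in\mathbb R}\int_{\mathbb R}k(x)e^{\lambda x}dx\big]$ with $J(k)=\int_{\mathbb R}k(x)x\,dx$. Then: (i) if $E(k)>f'(0)$, then $0<c_l^*<c_r^*$; (ii) if $E(k)=f'(0)$, then $0=c_l^*<c_r^*$; (iii) if $-f'(0)<E(k)<f'(0)$, then $c_l^*<0<c_r^*$; (iv) if $E(k)=-f'(0)$, then $c_l^*<c_r^*=0$; (v) if $E(k)<-f'(0)$, then $c_l^*<c_r^*<0$.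
   Context: $\operatorname{sign}(0)=0$. When $\int_{\mathbb R}k(x)e^{\lambda x}dx=+\infty$ the bracketed expressions are $+\infty$. The quantities $c_l^*$ and $c_r^*$ are the spreading speeds to the left and to the right of the equation $u_t=\int_{\mathbb R}k(x-y)u(t,y)dy-u+f(u)$. *)

theory Defs
  imports "HOL-Analysis.Analysis"
begin

definition expmom :: "(real \<Rightarrow> real) \<Rightarrow> real \<Rightarrow> ereal" where
  "expmom k l = enn2ereal (\<integral>\<^sup>+ x. ennreal (k x * exp (l * x)) \<partial>lborel)"

text \<open>The quantity l^(-1) [ integral k(x) e^(l x) dx - 1 + f'(0) ], computed in the extended reals
  (it is +infinity times 1/l when the integral diverges).\<close>
definition speedfun :: "(real \<Rightarrow> real) \<Rightarrow> real \<Rightarrow> real \<Rightarrow> ereal" where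
  "speedfun k d0 l = ereal (1 / l) * (expmom k l - 1 + ereal d0)"

definition c_left :: "(real \<Rightarrow> real) \<Rightarrow> real \<Rightarrow> ereal" where
  "c_left k d0 = (SUP l \<in> {..<0}. speedfun k d0 l)"

definition c_right :: "(real \<Rightarrow> real) \<Rightarrow> real \<Rightarrow> ereal" where
  "c_right k d0 = (INF l \<in> {0<..}. speedfun k d0 l)"

definition Jk :: "(real \<Rightarrow> real) \<Rightarrow> real" where
  "Jk k = (\<integral> x. k x * x \<partial>lborel)"

definition Ek :: "(real \<Rightarrow> real) \<Rightarrow> ereal" where
  "Ek k = ereal (sgn (Jk k)) * (1 - (INF l. expmom k l))"

end

theory Submission
  imports Defs
begin


lemma ereal_neg_antimono:
  fixes x y :: ereal
  assumes "r < 0" "x \<le> y"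
  shows "ereal r * y \<le> ereal r * x"
  using assms by (cases x; cases y) (auto simp: mult_left_mono_neg)

lemma g_lower:
  fixes m :: ereal
  assumes "ereal a \<le> m"
  shows "ereal (a - 1 + d) \<le> m - 1 + ereal d"
  using assms by (cases m) (auto simp: one_ereal_def)

lemma left_general:
  fixes M :: "real \<Rightarrow> ereal"
  assumes c: "c > 0" and a: "a > 0"
    and low: "\<And>l. l < 0 \<Longrightarrow> ereal (1 - d + a + l * b) \<le> M l"
    and quad: "\<And>l. l < 0 \<Longrightarrow> ereal (c * l^2) \<le> M l"
  shows "(SUP l\<in>{..<0}. ereal (1/l) * (M l - 1 + ereal d)) < ereal b"
proof -
  define L where "L = (\<bar>d-1\<bar> + 1 + \<bar>b\<bar>) / c + 1"
  have L1: "L \<ge> 1" using c by (simp add: L_def)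
  have cL: "c * L \<ge> \<bar>d-1\<bar> + 1 + \<bar>b\<bar>" using c by (simp add: L_def field_simps)
  define q where "q = min 1 (a / L)"
  have q: "q > 0" using a L1 by (simp add: q_def)
  have "ereal (1/l) * (M l - 1 + ereal d) \<le> ereal (b - q)" if l: "l < 0" for l
  proof (cases "l \<le> -L")
    case True
    have "ereal (1/l) * (M l - 1 + ereal d) \<le> ereal (1/l) * ereal (c*l^2 - 1 + d)"
      by (rule ereal_neg_antimono) (use l g_lower[OF quad[OF l]] in auto)
    also have "\<dots> = ereal ((c*l^2 - 1 + d) / l)" by simp
    also have "(c*l^2 - 1 + d) / l \<le> b - 1"
    proof -
      have "c * l^2 = (c * (-l)) * (-l)" by (simp add: power2_eq_square)
      also have "\<dots> \<ge> (c * L) * (-l)"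
        using True c L1 by (intro mult_right_mono mult_left_mono) auto
      finally have "c*l^2 \<ge> (\<bar>d-1\<bar> + 1 + \<bar>b\<bar>) * (-l)"
        using cL True L1 by (smt (verit) mult_right_mono)
      moreover have "\<bar>d-1\<bar> * 1 \<le> \<bar>d-1\<bar> * (-l)"
        by (rule mult_left_mono) (use True L1 in auto)
      moreover have "(1 - b) * (-l) \<le> (1 + \<bar>b\<bar>) * (-l)"
        by (rule mult_right_mono) (use l in auto)
      moreover have "(\<bar>d-1\<bar> + 1 + \<bar>b\<bar>) * (-l) = \<bar>d-1\<bar> * (-l) + (1 + \<bar>b\<bar>) * (-l)"
        by (simp add: algebra_simps)
      moreover have "(1 - b) * (-l) = (b - 1) * l" by (simp add: algebra_simps)
      moreover have "- \<bar>d-1\<bar> \<le> d - 1" by simp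
      ultimately have "c*l^2 - 1 + d \<ge> (b - 1) * l" by linarith
      then show ?thesis using l by (simp add: neg_divide_le_eq)
    qed
    also have "b - 1 \<le> b - q" by (simp add: q_def)
    finally show ?thesis by simp
  next
    case False
    have "ereal (1/l) * (M l - 1 + ereal d) \<le> ereal (1/l) * ereal (a + l*b)"
    proof (rule ereal_neg_antimono)
      have e: "1 - d + a + l * b - 1 + d = a + l*b" by simp
      show "ereal (a + l * b) \<le> M l - 1 + ereal d"
        using g_lower[OF low[OF l], of d] unfolding e .
    qed (use l in simp)
    also have "\<dots> = ereal (b + a / l)" using l by (simp add: field_simps)
    also have "a / l \<le> - (a / L)"
    proof -
      have "a*(-l) \<le> a*L" by (rule mult_left_mono) (use False a in auto)
      then show ?thesis using l L1 by (simp add: divide_simps)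
    qed
    also have "- (a / L) \<le> - q" by (simp add: q_def)
    finally show ?thesis by simp
  qed
  then have "(SUP l\<in>{..<0}. ereal (1/l) * (M l - 1 + ereal d)) \<le> ereal (b - q)"
    by (intro SUP_least) auto
  also have "\<dots> < ereal b" using q by simp
  finally show ?thesis .
qed


lemma right_general:
  fixes M :: "real \<Rightarrow> ereal"
  assumes c: "c > 0" and a: "a > 0"
    and low: "\<And>l. l > 0 \<Longrightarrow> ereal (1 - d + a + l * b) \<le> M l"
    and quad: "\<And>l. l > 0 \<Longrightarrow> ereal (c * l^2) \<le> M l"
  shows "ereal b < (INF l\<in>{0<..}. ereal (1/l) * (M l - 1 + ereal d))"
proof -
  define L where "L = (\<bar>d-1\<bar> + 1 + \<bar>b\<bar>) / c + 1"
  have L1: "L \<ge> 1" using c by (simp add: L_def)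
  have cL: "c * L \<ge> \<bar>d-1\<bar> + 1 + \<bar>b\<bar>" using c by (simp add: L_def field_simps)
  define q where "q = min 1 (a / L)"
  have q: "q > 0" using a L1 by (simp add: q_def)
  have "ereal (b + q) \<le> ereal (1/l) * (M l - 1 + ereal d)" if l: "l > 0" for l
  proof (cases "l \<ge> L")
    case True
    have "b + q \<le> b + 1" by (simp add: q_def)
    also have "b + 1 \<le> (c*l^2 - 1 + d) / l"
    proof -
      have "c * l^2 = (c * l) * l" by (simp add: power2_eq_square)
      also have "\<dots> \<ge> (c * L) * l"
        using True c L1 l by (intro mult_right_mono mult_left_mono) auto
      finally have "c*l^2 \<ge> (\<bar>d-1\<bar> + 1 + \<bar>b\<bar>) * l"
        using cL True L1 l by (smt (verit) mult_right_mono)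
      moreover have "\<bar>d-1\<bar> * 1 \<le> \<bar>d-1\<bar> * l"
        by (rule mult_left_mono) (use True L1 in auto)
      moreover have "(1 + b) * l \<le> (1 + \<bar>b\<bar>) * l"
        by (rule mult_right_mono) (use l in auto)
      moreover have "(\<bar>d-1\<bar> + 1 + \<bar>b\<bar>) * l = \<bar>d-1\<bar> * l + (1 + \<bar>b\<bar>) * l"
        by (simp add: algebra_simps)
      moreover have "(1 + b) * l = (b + 1) * l" by (simp add: algebra_simps)
      moreover have "- \<bar>d-1\<bar> \<le> d - 1" by simp
      ultimately have "c*l^2 - 1 + d \<ge> (b + 1) * l" by linarith
      then show ?thesis using l by (simp add: pos_le_divide_eq)
    qed
    finally have "ereal (b + q) \<le> ereal ((c*l^2 - 1 + d) / l)" by simp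
    also have "\<dots> = ereal (1/l) * ereal (c*l^2 - 1 + d)" by simp
    also have "\<dots> \<le> ereal (1/l) * (M l - 1 + ereal d)"
      by (rule ereal_mult_left_mono) (use l g_lower[OF quad[OF l]] in auto)
    finally show ?thesis .
  next
    case False
    have "q \<le> a / L" by (simp add: q_def)
    moreover have "a / l \<ge> (a / L)"
    proof -
      have "a*l \<le> a*L" by (rule mult_left_mono) (use False a in auto)
      then show ?thesis using l L1 by (simp add: divide_simps)
    qed
    ultimately have "ereal (b + q) \<le> ereal (b + a / l)" by simp
    also have "\<dots> = ereal (1/l) * ereal (a + l*b)" using l by (simp add: field_simps)
    also have "\<dots> \<le> ereal (1/l) * (M l - 1 + ereal d)"
    proof (rule ereal_mult_left_mono)
      have e: "1 - d + a + l * b - 1 + d = a + l*b" by simp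
      show "ereal (a + l * b) \<le> M l - 1 + ereal d"
        using g_lower[OF low[OF l], of d] unfolding e .
    qed (use l in simp)
    finally show ?thesis .
  qed
  then have "ereal (b + q) \<le> (INF l\<in>{0<..}. ereal (1/l) * (M l - 1 + ereal d))"
    by (intro INF_greatest) auto
  moreover have "ereal b < ereal (b + q)" using q by simp
  ultimately show ?thesis by order
qed

lemma left_pos:
  fixes M :: "real \<Rightarrow> ereal"
  assumes l: "l < 0" and nn: "0 \<le> M l" and lt: "M l < ereal (1 - d)"
  shows "0 < (SUP l\<in>{..<0}. ereal (1/l) * (M l - 1 + ereal d))"
proof -
  obtain \<mu> where mu: "M l = ereal \<mu>" using nn lt by (cases "M l") auto
  have "\<mu> - 1 + d < 0" using lt mu by simp
  then have "0 < (\<mu> - 1 + d) / l" using l by (simp add: divide_neg_neg)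
  also have "ereal ((\<mu> - 1 + d) / l) = ereal (1/l) * (M l - 1 + ereal d)"
    using mu by (simp add: one_ereal_def)
  also have "\<dots> \<le> (SUP l\<in>{..<0}. ereal (1/l) * (M l - 1 + ereal d))"
    using l by (intro SUP_upper) auto
  finally show ?thesis by (simp add: zero_ereal_def)
qed

lemma right_neg:
  fixes M :: "real \<Rightarrow> ereal"
  assumes l: "l > 0" and nn: "0 \<le> M l" and lt: "M l < ereal (1 - d)"
  shows "(INF l\<in>{0<..}. ereal (1/l) * (M l - 1 + ereal d)) < 0"
proof -
  obtain \<mu> where mu: "M l = ereal \<mu>" using nn lt by (cases "M l") auto
  have "\<mu> - 1 + d < 0" using lt mu by simp
  then have "(\<mu> - 1 + d) / l < 0" using l by (simp add: divide_neg_pos)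
  have "(INF l\<in>{0<..}. ereal (1/l) * (M l - 1 + ereal d)) \<le> ereal (1/l) * (M l - 1 + ereal d)"
    using l by (intro INF_lower) auto
  also have "\<dots> = ereal ((\<mu> - 1 + d) / l)"
    using mu by (simp add: one_ereal_def)
  also have "\<dots> < 0" using \<open>(\<mu> - 1 + d) / l < 0\<close> by simp
  finally show ?thesis .
qed


lemma left_zero:
  fixes M :: "real \<Rightarrow> ereal"
  assumes J: "J > 0" and d: "d > 0"
    and lowm: "\<And>l. ereal (1 - d) \<le> M l"
    and low: "\<And>l. ereal (1 + l * J) \<le> M l"
    and approx: "\<And>\<delta>. \<delta> > 0 \<Longrightarrow> \<exists>l. M l < ereal (1 - d + \<delta>)"
  shows "(SUP l\<in>{..<0}. ereal (1/l) * (M l - 1 + ereal d)) = 0"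
proof (rule antisym)
  show "(SUP l\<in>{..<0}. ereal (1/l) * (M l - 1 + ereal d)) \<le> 0"
  proof (intro SUP_least)
    fix l :: real assume "l \<in> {..<0}"
    then have l: "l < 0" by simp
    have "ereal (1/l) * (M l - 1 + ereal d) \<le> ereal (1/l) * ereal 0"
      by (rule ereal_neg_antimono) (use l g_lower[OF lowm[of l], of d] in auto)
    then show "ereal (1/l) * (M l - 1 + ereal d) \<le> 0" by (simp add: zero_ereal_def)
  qed
next
  show "0 \<le> (SUP l\<in>{..<0}. ereal (1/l) * (M l - 1 + ereal d))"
  proof (rule ereal_le_epsilon2)
    fix e :: real assume e: "e > 0"
    define \<delta> where "\<delta> = min (e * d / (2 * J)) (d / 2)"
    have \<delta>: "\<delta> > 0" using e d J by (simp add: \<delta>_def)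
    obtain l where lt: "M l < ereal (1 - d + \<delta>)" using approx[OF \<delta>] by blast
    obtain \<mu> where mu: "M l = ereal \<mu>" using lt lowm[of l] by (cases "M l") auto
    have mu1: "\<mu> < 1 - d + \<delta>" and mu2: "1 - d \<le> \<mu>" and mu3: "1 + l * J \<le> \<mu>"
      using lt lowm[of l] low[of l] mu by auto
    have "\<delta> \<le> d / 2" by (simp add: \<delta>_def)
    then have lJ: "- l * J > d / 2" using mu1 mu3 by linarith
    have l: "l < 0"
    proof (rule ccontr)
      assume "\<not> l < 0"
      then have "l * J \<ge> 0" using J by simp
      then show False using lJ d by linarith
    qed
    have "e * (d / 2) < e * (- l * J)" by (rule mult_strict_left_mono) (use lJ e in auto)
    then have "e * d / (2 * J) < e * (- l)" using J by (simp add: field_simps)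
    moreover have "\<delta> \<le> e * d / (2 * J)" by (simp add: \<delta>_def)
    ultimately have "\<mu> - 1 + d \<le> -e * l" using mu1 by simp
    then have ge: "- e \<le> (\<mu> - 1 + d) / l" using l by (simp add: neg_le_divide_eq)
    have "ereal (- e) \<le> ereal ((\<mu> - 1 + d) / l)" using ge by simp
    also have "ereal ((\<mu> - 1 + d) / l) = ereal (1/l) * (M l - 1 + ereal d)"
      using mu by (simp add: one_ereal_def)
    also have "\<dots> \<le> (SUP l\<in>{..<0}. ereal (1/l) * (M l - 1 + ereal d))"
      using l by (intro SUP_upper) auto
    finally have "ereal (- e) \<le> (SUP l\<in>{..<0}. ereal (1/l) * (M l - 1 + ereal d))" .
    then show "0 \<le> (SUP l\<in>{..<0}. ereal (1/l) * (M l - 1 + ereal d)) + ereal e"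
      by (cases "(SUP l\<in>{..<0}. ereal (1/l) * (M l - 1 + ereal d))") auto
  qed
qed

lemma right_zero:
  fixes M :: "real \<Rightarrow> ereal"
  assumes J: "J < 0" and d: "d > 0"
    and lowm: "\<And>l. ereal (1 - d) \<le> M l"
    and low: "\<And>l. ereal (1 + l * J) \<le> M l"
    and approx: "\<And>\<delta>. \<delta> > 0 \<Longrightarrow> \<exists>l. M l < ereal (1 - d + \<delta>)"
  shows "(INF l\<in>{0<..}. ereal (1/l) * (M l - 1 + ereal d)) = 0"
proof (rule antisym)
  show "0 \<le> (INF l\<in>{0<..}. ereal (1/l) * (M l - 1 + ereal d))"
  proof (intro INF_greatest)
    fix l :: real assume "l \<in> {0<..}"
    then have l: "l > 0" by simp
    have "ereal (1/l) * ereal 0 \<le> ereal (1/l) * (M l - 1 + ereal d)"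
      by (rule ereal_mult_left_mono) (use l g_lower[OF lowm[of l], of d] in auto)
    then show "0 \<le> ereal (1/l) * (M l - 1 + ereal d)" by (simp add: zero_ereal_def)
  qed
next
  show "(INF l\<in>{0<..}. ereal (1/l) * (M l - 1 + ereal d)) \<le> 0"
  proof (rule ereal_le_epsilon2)
    fix e :: real assume e: "e > 0"
    define \<delta> where "\<delta> = min (e * d / (2 * (-J))) (d / 2)"
    have "e * d / (2 * (-J)) > 0" using e d J by (intro divide_pos_pos) auto
    then have \<delta>: "\<delta> > 0" using d by (simp add: \<delta>_def)
    obtain l where lt: "M l < ereal (1 - d + \<delta>)" using approx[OF \<delta>] by blast
    obtain \<mu> where mu: "M l = ereal \<mu>" using lt lowm[of l] by (cases "M l") auto
    have mu1: "\<mu> < 1 - d + \<delta>" and mu2: "1 - d \<le> \<mu>" and mu3: "1 + l * J \<le> \<mu>"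
      using lt lowm[of l] low[of l] mu by auto
    have "\<delta> \<le> d / 2" by (simp add: \<delta>_def)
    then have lJ: "l * (- J) > d / 2" using mu1 mu3 by linarith
    have l: "l > 0"
    proof (rule ccontr)
      assume "\<not> l > 0"
      then have "l * (-J) \<le> 0" using J by (simp add: mult_nonpos_nonpos)
      then show False using lJ d by linarith
    qed
    have "e * (d / 2) < e * (l * (-J))" by (rule mult_strict_left_mono) (use lJ e in auto)
    then have "e * d / (2 * (-J)) < e * l" using J by (simp add: field_simps)
    moreover have "\<delta> \<le> e * d / (2 * (-J))" by (simp add: \<delta>_def)
    ultimately have "\<mu> - 1 + d \<le> e * l" using mu1 by simp
    then have le: "(\<mu> - 1 + d) / l \<le> e" using l by (simp add: divide_le_eq)
    have "(INF l\<in>{0<..}. ereal (1/l) * (M l - 1 + ereal d)) \<le> ereal (1/l) * (M l - 1 + ereal d)"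
      using l by (intro INF_lower) auto
    also have "\<dots> = ereal ((\<mu> - 1 + d) / l)"
      using mu by (simp add: one_ereal_def)
    also have "\<dots> \<le> ereal e" using le by simp
    finally show "(INF l\<in>{0<..}. ereal (1/l) * (M l - 1 + ereal d)) \<le> 0 + ereal e" by simp
  qed
qed

lemma exp_ge_sq4:
  fixes t :: real assumes "t \<ge> 0" shows "t^2 / 4 \<le> exp t"
proof -
  have "exp t = exp (t/2) ^ 2" by (simp add: power2_eq_square flip: exp_add)
  moreover have "t/2 \<le> exp (t/2)" using exp_ge_add_one_self[of "t/2"] by linarith
  then have "(t/2)^2 \<le> exp (t/2) ^ 2" using assms by (intro power_mono) auto
  ultimately show ?thesis by (simp add: power_divide)
qed

lemma expmom_nonneg: "0 \<le> expmom (k::real\<Rightarrow>real) l"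
  by (simp add: expmom_def)

lemma k_meas:
  fixes k :: "real \<Rightarrow> real"
  assumes "continuous_on UNIV k" shows "k \<in> borel_measurable lborel"
  using borel_measurable_continuous_onI[OF assms] by simp

lemma expmom_zero:
  fixes k :: "real \<Rightarrow> real"
  assumes cont: "continuous_on UNIV k" and nn: "\<And>x. k x \<ge> 0"
    and int: "integrable lborel k" and mass: "(\<integral> x. k x \<partial>lborel) = 1"
  shows "expmom k 0 = 1"
proof -
  have "(\<integral>\<^sup>+ x. ennreal (k x * exp (0 * x)) \<partial>lborel) = (\<integral>\<^sup>+ x. ennreal (k x) \<partial>lborel)" by simp
  also have "\<dots> = ennreal (\<integral> x. k x \<partial>lborel)"
    using int nn by (intro nn_integral_eq_integral) auto
  finally show ?thesis using mass by (simp add: expmom_def one_ennreal.rep_eq)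
qed

lemma kx_integrable:
  fixes k :: "real \<Rightarrow> real"
  assumes cont: "continuous_on UNIV k" and nn: "\<And>x. k x \<ge> 0"
    and K1: "\<exists>l>0. integrable lborel (\<lambda>x. k x * exp (l * \<bar>x\<bar>))"
  shows "integrable lborel (\<lambda>x. k x * x)"
proof -
  obtain l where l: "l > 0" and int: "integrable lborel (\<lambda>x. k x * exp (l * \<bar>x\<bar>))" using K1 by blast
  have km[measurable]: "k \<in> borel_measurable lborel" using k_meas[OF cont] .
  have int2: "integrable lborel (\<lambda>x. k x * exp (l * \<bar>x\<bar>) / l)" using int by simp
  show ?thesis
  proof (rule Bochner_Integration.integrable_bound[OF int2])
    show "(\<lambda>x. k x * x) \<in> borel_measurable lborel" by measurable
    show "AE x in lborel. norm (k x * x) \<le> norm (k x * exp (l * \<bar>x\<bar>) / l)"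
    proof (intro AE_I2)
      fix x :: real
      have "l * \<bar>x\<bar> \<le> exp (l * \<bar>x\<bar>)" using exp_ge_add_one_self[of "l * \<bar>x\<bar>"] by linarith
      then have "\<bar>x\<bar> \<le> exp (l * \<bar>x\<bar>) / l" using l by (simp add: field_simps)
      then have "k x * \<bar>x\<bar> \<le> k x * (exp (l * \<bar>x\<bar>) / l)" using nn[of x] by (intro mult_left_mono) auto
      then show "norm (k x * x) \<le> norm (k x * exp (l * \<bar>x\<bar>) / l)"
        using nn[of x] l by (simp add: abs_mult)
    qed
  qed
qed

lemma expmom_lower:
  fixes k :: "real \<Rightarrow> real"
  assumes cont: "continuous_on UNIV k" and nn: "\<And>x. k x \<ge> 0"
    and int: "integrable lborel k" and mass: "(\<integral> x. k x \<partial>lborel) = 1"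
    and K1: "\<exists>l>0. integrable lborel (\<lambda>x. k x * exp (l * \<bar>x\<bar>))"
  shows "ereal (1 + l * Jk k) \<le> expmom k l"
proof (cases "(\<integral>\<^sup>+ x. ennreal (k x * exp (l * x)) \<partial>lborel) = top")
  case True
  then show ?thesis by (simp add: expmom_def)
next
  case False
  have km[measurable]: "k \<in> borel_measurable lborel" using k_meas[OF cont] .
  have ie: "integrable lborel (\<lambda>x. k x * exp (l * x))"
    using False nn by (intro integrableI_nonneg) (auto simp: top.not_eq_extremum)
  have ix: "integrable lborel (\<lambda>x. k x * x)" using kx_integrable[OF cont nn K1] .
  have eq: "(\<integral>\<^sup>+ x. ennreal (k x * exp (l * x)) \<partial>lborel) = ennreal (\<integral> x. k x * exp (l * x) \<partial>lborel)"
    using ie nn by (intro nn_integral_eq_integral) auto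
  have "1 + l * Jk k = (\<integral> x. k x + l * (k x * x) \<partial>lborel)"
    using int ix mass by (simp add: Jk_def)
  also have "\<dots> \<le> (\<integral> x. k x * exp (l * x) \<partial>lborel)"
  proof (rule integral_mono)
    show "integrable lborel (\<lambda>x. k x + l * (k x * x))" using int ix by auto
    show "integrable lborel (\<lambda>x. k x * exp (l * x))" using ie .
    fix x :: real
    have "k x * (1 + l * x) \<le> k x * exp (l * x)"
      using nn[of x] exp_ge_add_one_self[of "l*x"] by (intro mult_left_mono) auto
    then show "k x + l * (k x * x) \<le> k x * exp (l * x)" by (simp add: algebra_simps)
  qed
  finally show ?thesis
    using eq nn by (simp add: expmom_def integral_nonneg_AE ie)
qed


lemma expmom_quad:
  fixes k :: "real \<Rightarrow> real"
  assumes cont: "continuous_on UNIV k" and nn: "\<And>x. k x \<ge> 0"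
    and x0: "x0 \<noteq> 0" and kx0: "k x0 > 0"
  shows "\<exists>c>0. \<forall>l. l * x0 > 0 \<longrightarrow> ereal (c * l^2) \<le> expmom k l"
proof -
  have km[measurable]: "k \<in> borel_measurable lborel" using k_meas[OF cont] .
  have "isCont k x0" using cont by (simp add: continuous_on_eq_continuous_at)
  then obtain r where r: "r > 0" and rk: "\<And>y. dist y x0 < r \<Longrightarrow> dist (k y) (k x0) < k x0 / 2"
    using kx0 unfolding continuous_at_eps_delta by (metis half_gt_zero)
  define r' where "r' = min r (\<bar>x0\<bar> / 2)"
  have r': "r' > 0" using r x0 by (simp add: r'_def)
  define C where "C = k x0 / 2 * (x0^2 / 16)"
  have C: "C > 0" using kx0 x0 by (simp add: C_def)
  define I where "I = {x0 - r' <..< x0 + r'}"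
  have "ereal (2 * r' * C * l^2) \<le> expmom k l" if l: "l * x0 > 0" for l
  proof -
    have pt: "ennreal (C * l^2) * indicator I y \<le> ennreal (k y * exp (l * y))" for y
    proof (cases "y \<in> I")
      case True
      then have dy: "\<bar>y - x0\<bar> < r'" by (auto simp: I_def abs_less_iff)
      then have "dist y x0 < r" by (simp add: dist_real_def r'_def)
      then have "\<bar>k y - k x0\<bar> < k x0 / 2" using rk by (simp add: dist_real_def)
      then have ky: "k y \<ge> k x0 / 2" by linarith
      have dy2: "\<bar>y - x0\<bar> < \<bar>x0\<bar> / 2" using dy by (simp add: r'_def)
      have yx: "y * x0 > 0"
      proof -
        have "y * x0 = x0^2 + (y - x0) * x0" by (simp add: algebra_simps power2_eq_square)
        moreover have "\<bar>(y - x0) * x0\<bar> < x0^2"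
        proof -
          have "\<bar>(y - x0) * x0\<bar> = \<bar>y - x0\<bar> * \<bar>x0\<bar>" by (simp add: abs_mult)
          also have "\<dots> < (\<bar>x0\<bar>/2) * \<bar>x0\<bar>" using dy2 x0 by (intro mult_strict_right_mono) auto
          also have "\<dots> \<le> x0^2" by (simp add: power2_eq_square abs_mult_self)
          finally show ?thesis .
        qed
        ultimately show ?thesis by linarith
      qed
      have ly: "l * y > 0"
      proof -
        have "(l * x0) * (y * x0) > 0" using l yx by simp
        then have "(l * y) * (x0 * x0) > 0" by (simp add: algebra_simps)
        then show ?thesis using x0 by (simp add: zero_less_mult_iff)
      qed
      have absy: "\<bar>y\<bar> \<ge> \<bar>x0\<bar> / 2" using dy2 by linarith
      have "x0^2 / 4 \<le> y^2"
      proof -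
        have "(\<bar>x0\<bar>/2)^2 \<le> \<bar>y\<bar>^2" using absy by (intro power_mono) auto
        then show ?thesis by (simp add: power_divide)
      qed
      then have "l^2 * (x0^2/4) \<le> l^2 * y^2" by (intro mult_left_mono) auto
      then have "l^2 * x0^2 / 16 \<le> (l*y)^2 / 4" by (simp add: power_mult_distrib)
      also have "\<dots> \<le> exp (l * y)" using exp_ge_sq4[of "l*y"] ly by simp
      finally have e: "l^2 * x0^2 / 16 \<le> exp (l * y)" .
      have "C * l^2 = (k x0 / 2) * (l^2 * x0^2 / 16)" by (simp add: C_def algebra_simps)
      also have "\<dots> \<le> k y * exp (l * y)"
        using ky e kx0 by (intro mult_mono) auto
      finally show ?thesis using True by (simp add: ennreal_leI)
    next
      case False
      then show ?thesis by simp
    qed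
    have "ennreal (2 * r' * C * l^2) = ennreal (C * l^2) * emeasure lborel I"
      using r' C by (simp add: I_def ennreal_mult' mult.commute mult.left_commute)
    also have "\<dots> = (\<integral>\<^sup>+ y. ennreal (C * l^2) * indicator I y \<partial>lborel)"
      by (rule nn_integral_cmult_indicator[symmetric]) (simp add: I_def)
    also have "\<dots> \<le> (\<integral>\<^sup>+ y. ennreal (k y * exp (l * y)) \<partial>lborel)"
      by (intro nn_integral_mono pt)
    finally have "ennreal (2 * r' * C * l^2) \<le> (\<integral>\<^sup>+ y. ennreal (k y * exp (l * y)) \<partial>lborel)" .
    then have "enn2ereal (ennreal (2 * r' * C * l^2)) \<le> expmom k l"
      by (simp add: expmom_def less_eq_ennreal.rep_eq)
    then show ?thesis using r' C by simp
  qed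
  then show ?thesis using r' C by (intro exI[of _ "2 * r' * C"]) auto
qed

theorem theorem2p4:
  fixes k :: "real \<Rightarrow> real" and f f' :: "real \<Rightarrow> real"
  assumes k_cont: "continuous_on UNIV k"
    and k_nonneg: "\<And>x. k x \<ge> 0"
    and k_int: "integrable lborel k"
    and k_mass: "(\<integral> x. k x \<partial>lborel) = 1"
    and K1: "\<exists>l>0. integrable lborel (\<lambda>x. k x * exp (l * \<bar>x\<bar>))"
    and K2: "\<exists>x1 x2. x1 > 0 \<and> x2 < 0 \<and> k x1 > 0 \<and> k x2 > 0"
    and f_deriv: "\<And>u. u \<in> {0..1} \<Longrightarrow> (f has_real_derivative f' u) (at u within {0..1})"
    and f'_cont: "continuous_on {0..1} f'"
    and H0: "f 0 = 0" and H1: "f 1 = 0"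
    and Hpos: "\<And>u. u \<in> {0<..<1} \<Longrightarrow> f u > 0"
    and Hd0: "f' 0 > 0"
    and KPP: "\<And>u. u \<in> {0<..<1} \<Longrightarrow> f u \<le> f' 0 * u"
  shows "(Ek k > ereal (f' 0) \<longrightarrow> 0 < c_left k (f' 0) \<and> c_left k (f' 0) < c_right k (f' 0))
       \<and> (Ek k = ereal (f' 0) \<longrightarrow> 0 = c_left k (f' 0) \<and> c_left k (f' 0) < c_right k (f' 0))
       \<and> (- ereal (f' 0) < Ek k \<and> Ek k < ereal (f' 0) \<longrightarrow> c_left k (f' 0) < 0 \<and> 0 < c_right k (f' 0))
       \<and> (Ek k = - ereal (f' 0) \<longrightarrow> c_left k (f' 0) < c_right k (f' 0) \<and> c_right k (f' 0) = 0)
       \<and> (Ek k < - ereal (f' 0) \<longrightarrow> c_left k (f' 0) < c_right k (f' 0) \<and> c_right k (f' 0) < 0)"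
proof -
  define d where "d = f' 0"
  define M where "M = expmom k"
  define J where "J = Jk k"
  have d: "d > 0" using Hd0 by (simp add: d_def)
  have M0: "M 0 = 1" unfolding M_def by (rule expmom_zero[OF k_cont k_nonneg k_int k_mass])
  have low: "\<And>l. ereal (1 + l * J) \<le> M l"
    unfolding M_def J_def by (rule expmom_lower[OF k_cont k_nonneg k_int k_mass K1])
  have nn: "\<And>l. 0 \<le> M l" unfolding M_def by (rule expmom_nonneg)
  obtain x1 x2 where x1: "x1 > 0" "k x1 > 0" and x2: "x2 < 0" "k x2 > 0" using K2 by blast
  obtain c1 where c1: "c1 > 0" "\<And>l. l * x1 > 0 \<Longrightarrow> ereal (c1 * l^2) \<le> M l"
    using expmom_quad[OF k_cont k_nonneg _ x1(2)] x1(1) unfolding M_def by fastforce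
  obtain c2 where c2: "c2 > 0" "\<And>l. l * x2 > 0 \<Longrightarrow> ereal (c2 * l^2) \<le> M l"
    using expmom_quad[OF k_cont k_nonneg _ x2(2)] x2(1) unfolding M_def by fastforce
  have qpos: "\<And>l. l > 0 \<Longrightarrow> ereal (c1 * l^2) \<le> M l" using c1(2) x1(1) by simp
  have qneg: "\<And>l. l < 0 \<Longrightarrow> ereal (c2 * l^2) \<le> M l"
    using c2(2) x2(1) by (simp add: mult_neg_neg)
  define cl where "cl = (SUP l\<in>{..<0}. ereal (1/l) * (M l - 1 + ereal d))"
  define cr where "cr = (INF l\<in>{0<..}. ereal (1/l) * (M l - 1 + ereal d))"
  have clk: "c_left k (f' 0) = cl" by (simp add: c_left_def speedfun_def cl_def M_def d_def)
  have crk: "c_right k (f' 0) = cr" by (simp add: c_right_def speedfun_def cr_def M_def d_def)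
  have lowd: "\<And>l. ereal (1 - d + d + l * J) \<le> M l" using low by simp
  have clJ: "cl < ereal J" unfolding cl_def
    by (rule left_general[OF c2(1) d lowd qneg]) 
  have crJ: "ereal J < cr" unfolding cr_def
    by (rule right_general[OF c1(1) d lowd qpos])
  have sep: "cl < cr" using clJ crJ by order
  define m where "m = (INF l. M l)"
  have m1: "m \<le> 1" unfolding m_def using M0 by (metis INF_lower UNIV_I)
  have m0: "0 \<le> m" unfolding m_def using nn by (intro INF_greatest) auto
  obtain m' where m': "m = ereal m'" using m0 m1 by (cases m) auto
  have m'1: "m' \<le> 1" and m'0: "0 \<le> m'" using m0 m1 m' by auto
  have lowm: "\<And>l. ereal m' \<le> M l" unfolding m'[symmetric] m_def by (rule INF_lower) simp
  have approx: "\<exists>l. M l < ereal (m' + \<delta>)" if "\<delta> > 0" for \<delta>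
  proof -
    have "(INF l. M l) < ereal (m' + \<delta>)" using that m' m_def by simp
    then show ?thesis by (simp add: INF_less_iff)
  qed
  have Ek: "Ek k = ereal (sgn J * (1 - m'))"
    by (simp add: Ek_def J_def[symmetric] M_def[symmetric] m_def[symmetric] m' one_ereal_def)
  have main: "(Ek k > ereal d \<longrightarrow> 0 < cl \<and> cl < cr)
       \<and> (Ek k = ereal d \<longrightarrow> 0 = cl \<and> cl < cr)
       \<and> (- ereal d < Ek k \<and> Ek k < ereal d \<longrightarrow> cl < 0 \<and> 0 < cr)
       \<and> (Ek k = - ereal d \<longrightarrow> cl < cr \<and> cr = 0)
       \<and> (Ek k < - ereal d \<longrightarrow> cl < cr \<and> cr < 0)"
  proof (cases "J > 0")
    case Jp: True
    then have E: "Ek k = ereal (1 - m')" using Ek by simp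
    have geq1: "\<And>l. l \<ge> 0 \<Longrightarrow> ereal 1 \<le> M l"
    proof -
      fix l :: real assume "l \<ge> 0"
      then have "1 \<le> 1 + l * J" using Jp by simp
      then show "ereal 1 \<le> M l" using low[of l] by (meson ereal_less_eq(3) order_trans)
    qed
    have "0 < ereal J" using Jp by simp
    then have crp: "0 < cr" using crJ by order
    have i: "0 < cl" if "1 - m' > d"
    proof -
      have pos: "1 - d - m' > 0" using that by linarith
      obtain l where l: "M l < ereal (m' + (1 - d - m'))" using approx[OF pos] by auto
      have "\<not> l \<ge> 0"
      proof
        assume "l \<ge> 0"
        then have "ereal 1 < ereal (1 - d)" by (rule order.strict_trans1[OF geq1]) (use l in simp)
        then show False using d by simp
      qed
      then show ?thesis using left_pos[of l M d] l nn[of l] unfolding cl_def by simp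
    qed
    have ii: "cl = 0" if "1 - m' = d"
    proof -
      have me: "m' = 1 - d" using that by linarith
      show ?thesis unfolding cl_def
        by (rule left_zero[OF Jp d _ low]) (use lowm approx in \<open>simp_all add: me\<close>)
    qed
    have iii: "cl < 0" if "1 - m' < d"
    proof -
      have lw: "ereal (1 - d + (m' - 1 + d) + l * 0) \<le> M l" if "l < 0" for l using lowm[of l] by simp
      have "cl < ereal 0" unfolding cl_def
        by (rule left_general[OF c2(1) _ lw qneg]) (use \<open>1 - m' < d\<close> in auto)
      then show ?thesis by (simp add: zero_ereal_def)
    qed
    show ?thesis unfolding E
    proof (intro conjI impI)
      assume "ereal d < ereal (1 - m')" then show "0 < cl" using i by simp
    next
      assume "ereal (1 - m') = ereal d" then show "0 = cl" using ii by simp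
    next
      assume "- ereal d < ereal (1 - m') \<and> ereal (1 - m') < ereal d"
      then show "cl < 0" using iii by simp
    next
      assume "ereal (1 - m') = - ereal d" then show "cr = 0" using d m'1 by simp
    next
      assume "ereal (1 - m') < - ereal d" then show "cr < 0" using d m'1 by simp
    qed (use sep crp in auto)
  next
    case Jn: False
    show ?thesis
    proof (cases "J = 0")
      case True
      then have E: "Ek k = 0" using Ek by simp
      have z: "ereal 0 = 0" by (rule zero_ereal_def[symmetric])
      have a1: "cl < ereal 0" using clJ True by simp
      have a2: "ereal 0 < cr" using crJ True by simp
      have "cl < 0" "0 < cr" using a1 a2 unfolding z by auto
      then show ?thesis unfolding E using d sep by simp
    next
      case False
      then have Jn: "J < 0" using Jn by simp
      then have E: "Ek k = ereal (m' - 1)" using Ek by simp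
      have geq1: "\<And>l. l \<le> 0 \<Longrightarrow> ereal 1 \<le> M l"
      proof -
        fix l :: real assume "l \<le> 0"
        then have "1 \<le> 1 + l * J" using Jn by (simp add: mult_nonpos_nonpos)
        then show "ereal 1 \<le> M l" using low[of l] by (meson ereal_less_eq(3) order_trans)
      qed
      have "ereal J < 0" using Jn by simp
      then have cln: "cl < 0" using clJ by order
      have v: "cr < 0" if "m' - 1 < - d"
      proof -
        have pos: "1 - d - m' > 0" using that by linarith
        obtain l where l: "M l < ereal (m' + (1 - d - m'))" using approx[OF pos] by auto
        have "\<not> l \<le> 0"
      proof
        assume "l \<le> 0"
        then have "ereal 1 < ereal (1 - d)" by (rule order.strict_trans1[OF geq1]) (use l in simp)
        then show False using d by simp
      qed
        then show ?thesis using right_neg[of l M d] l nn[of l] unfolding cr_def by simp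
      qed
      have iv: "cr = 0" if "m' - 1 = - d"
      proof -
        have me: "m' = 1 - d" using that by linarith
        show ?thesis unfolding cr_def
          by (rule right_zero[OF Jn d _ low]) (use lowm approx in \<open>simp_all add: me\<close>)
      qed
      have iii: "0 < cr" if "- d < m' - 1"
      proof -
        have lw: "ereal (1 - d + (m' - 1 + d) + l * 0) \<le> M l" if "l > 0" for l using lowm[of l] by simp
        have "ereal 0 < cr" unfolding cr_def
          by (rule right_general[OF c1(1) _ lw qpos]) (use \<open>- d < m' - 1\<close> in auto)
        then show ?thesis by (simp add: zero_ereal_def)
      qed
      show ?thesis unfolding E
      proof (intro conjI impI)
        assume "ereal d < ereal (m' - 1)" then show "0 < cl" using d m'1 by simp
      next
        assume "ereal (m' - 1) = ereal d" then show "0 = cl" using d m'1 by simp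
      next
        assume "- ereal d < ereal (m' - 1) \<and> ereal (m' - 1) < ereal d"
        then show "0 < cr" using iii by simp
      next
        assume "ereal (m' - 1) = - ereal d" then show "cr = 0" using iv by simp
      next
        assume "ereal (m' - 1) < - ereal d" then show "cr < 0" using v by simp
      qed (use sep cln in auto)
    qed
  qed
  then show ?thesis unfolding clk crk d_def .
qed

end
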